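(* (1) Assume $$\Big(\frac{\bar\kappa_4}{\bar\kappa_2^2}+\delta\Big)\int\frac{\mathbb E[Q(y\mid\mathsf Z)(\bar{\mathsf Z}^2-1)]^2}{\mathbb E[Q(y\mid\mathsf Z)]}\,dy>1 .$$ Then, taking $$\bar g(y)=\frac{\mathbb E[(\bar{\mathsf Z}^2-1)Q(y\mid\mathsf Z)]}{\mathbb E[Q(y\mid\mathsf Z)]}=\mathbb E[\bar{\mathsf Z}^2-1\mid\mathsf Y=y],$$ the corresponding preprocessing function achieves weak recovery in the sense that the criticality condition $\big(\frac{\bar\kappa_4}{\bar\kappa_2^2}+\delta\big)\mathbb E[\bar g(\mathsf Y)\bar{\mathsf Z}^2]^2>\mathbb E[\bar g(\mathsf Y)^2]$ holds. Furthermore, this $\bar g$ satisfies $\inf_{y\in\operatorname{supp}\mathsf Y}\bar g(y)>-\gamma$, $\mathbb E[\bar g(\mathsf Y)]=0$ and $\mathbb E[\bar g(\mathsf Y)\bar{\mathsf Z}^2]>0$ (with $\gamma=(\bar\kappa_4/\bar\kappa_2^2+\delta)\mathbb E[\bar g(\mathsf Y)\bar{\mathsf Z}^2]$), provided $\operatorname{Var}(\mathbb E[\bar{\mathsf Z}^2\mid\mathsf Y])=\mathbb E[\mathbb E[\bar{\mathsf Z}^2-1\mid\mathsf Y]^2]>0$. (2) Conversely, if some preprocessing function satisfying the preprocessing assumptions (see context) satisfies the criticality condition $\big(\frac{\bar\kappa_4}{\bar\kappa_2^2}+\delta\big)\mathbb E[\bar g(\mathsf Y)\bar{\mathsf Z}^2]^2>\mathbb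 E[\bar g(\mathsf Y)^2]$, then the displayed integral inequality in (1) holds.
   Context: Let $n/d\to\delta\in(0,\infty)$. Let $\mathsf L$ be a random variable compactly supported in $(0,\infty)$ with positive variance (the limiting singular value distribution of the design). $\mathsf L_n$ has the law of $\mathsf L$ if $\delta\le1$ and $\delta^{-1}\mathrm{law}(\mathsf L)+(1-\delta^{-1})\delta_0$ if $\delta>1$; $\bar m_{2k}=\mathbb E[\mathsf L_n^{2k}]$, $\bar\kappa_2=\bar m_2$, $\bar\kappa_4=\bar m_4-(1+\delta)\bar m_2^2$. Let $P_{\mathsf B}$ have mean $0$ and variance $\rho>0$, $\sigma^2=\bar\kappa_2\rho$, $\mathsf Z\sim\mathcal N(0,\sigma^2)$, $\bar{\mathsf Z}=\mathsf Z/\sigma$, and $\mathsf Y\sim Q(\cdot\mid\mathsf Z)$, where $Q(\cdot\mid z)$ is the conditional density of the response $y=q(z,\mathsf E)$ of the generalized linear model given the linear predictor $z$ (with noise $\mathsf E$ independent of $\mathsf Z$). Preprocessing assumptions: $\bar g:\mathbb R\to\mathbb R$ bounded above with $\mathbb E[\bar g(\mathsf Y)]=0$, $\mathbb E[\bar g(\mathsf Y)\bar{\mathsf Z}^2]>0$ and $\inf_{y\in\operatorname{supp}\mathsf Y}\bar g(y)>-\gamma$, where $\gamma=(\bar\kappa_4/\bar\kappa_2^2+\delta)\mathbb E[\bar g(\mathsf Y)\bar{\mathsf Z}^2]$; the preprocessing function is $\mathcal T(y)=\bar g(y)/(\bar g(y)+\gamma)$, and with $\mathsf T=\mathcal T(\mathsf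 Y)$ of law $\mu_{\mathsf T}$, $\lim_{x\searrow\sup\operatorname{supp}\mu_{\mathsf T}}\mathbb E[\mathsf T/(x-\mathsf T)]=\infty$. The spectral estimator is the top eigenvector of $X^\top\operatorname{diag}(\mathcal T(y))X$; the criticality condition is the condition for its asymptotic overlap with the signal to be positive. *)

theory Defs
  imports "HOL-Probability.Probability"
begin

text \<open>Moments of L_n, whose law is law(L) if delta \<le> 1 and
  (1/delta) law(L) + (1 - 1/delta) Dirac_0 if delta > 1.  Since the atom at 0
  contributes nothing to positive moments, E[L_n^(2k)] (k \<ge> 1) is the
  following (written out literally).\<close>
definition mbar :: "real \<Rightarrow> real measure \<Rightarrow> nat \<Rightarrow> real" where
  "mbar \<delta> L k = (if \<delta> \<le> 1 then 1 else 1 / \<delta>) * (\<integral>l. l ^ (2 * k) \<partial>L)"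

definition kappa2 :: "real \<Rightarrow> real measure \<Rightarrow> real" where
  "kappa2 \<delta> L = mbar \<delta> L 1"

definition kappa4 :: "real \<Rightarrow> real measure \<Rightarrow> real" where
  "kappa4 \<delta> L = mbar \<delta> L 2 - (1 + \<delta>) * (mbar \<delta> L 1)^2"

definition cst :: "real \<Rightarrow> real measure \<Rightarrow> real" where
  "cst \<delta> L = kappa4 \<delta> L / (kappa2 \<delta> L)^2 + \<delta>"

definition sig :: "real \<Rightarrow> real measure \<Rightarrow> real \<Rightarrow> real" where
  "sig \<delta> L \<rho> = sqrt (kappa2 \<delta> L * \<rho>)"

text \<open>Q z y is the conditional density of Y at y given Z = z. Z = s * Zbar with
  Zbar standard Gaussian; expectations over Z are integrals against the standard
  normal density in the variable Zbar.\<close>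

definition EQ :: "(real \<Rightarrow> real \<Rightarrow> real) \<Rightarrow> real \<Rightarrow> real \<Rightarrow> real" where
  "EQ Q s y = (\<integral>x. Q (s * x) y * std_normal_density x \<partial>lborel)"

definition EQZ :: "(real \<Rightarrow> real \<Rightarrow> real) \<Rightarrow> real \<Rightarrow> real \<Rightarrow> real" where
  "EQZ Q s y = (\<integral>x. (x^2 - 1) * Q (s * x) y * std_normal_density x \<partial>lborel)"

definition gopt :: "(real \<Rightarrow> real \<Rightarrow> real) \<Rightarrow> real \<Rightarrow> real \<Rightarrow> real" where
  "gopt Q s y = EQZ Q s y / EQ Q s y"

definition Iopt :: "(real \<Rightarrow> real \<Rightarrow> real) \<Rightarrow> real \<Rightarrow> real" where
  "Iopt Q s = (\<integral>y. (EQZ Q s y)^2 / EQ Q s y \<partial>lborel)"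

definition lawY :: "(real \<Rightarrow> real \<Rightarrow> real) \<Rightarrow> real \<Rightarrow> real measure" where
  "lawY Q s = density lborel (\<lambda>y. ennreal (EQ Q s y))"

definition EY :: "(real \<Rightarrow> real \<Rightarrow> real) \<Rightarrow> real \<Rightarrow> (real \<Rightarrow> real) \<Rightarrow> real" where
  "EY Q s f = (\<integral>y. f y * EQ Q s y \<partial>lborel)"

text \<open>E[g(Y) Zbar^2], (Zbar, Y) having joint density phi(x) Q(s x, y).\<close>
definition EgZ2 :: "(real \<Rightarrow> real \<Rightarrow> real) \<Rightarrow> real \<Rightarrow> (real \<Rightarrow> real) \<Rightarrow> real" where
  "EgZ2 Q s g = (\<integral>y. (\<integral>x. g y * x^2 * Q (s * x) y * std_normal_density x \<partial>lborel) \<partial>lborel)"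

definition msupp :: "real measure \<Rightarrow> real set" where
  "msupp M = {y. \<forall>e>0. emeasure M (ball y e) > 0}"

definition gam :: "real \<Rightarrow> real measure \<Rightarrow> real \<Rightarrow> (real \<Rightarrow> real \<Rightarrow> real) \<Rightarrow> (real \<Rightarrow> real) \<Rightarrow> real" where
  "gam \<delta> L \<rho> Q g = cst \<delta> L * EgZ2 Q (sig \<delta> L \<rho>) g"

text \<open>inf over supp Y of g is > - gamma (written out: some lower bound > -gamma).\<close>
definition inf_cond :: "real \<Rightarrow> real measure \<Rightarrow> real \<Rightarrow> (real \<Rightarrow> real \<Rightarrow> real) \<Rightarrow> (real \<Rightarrow> real) \<Rightarrow> bool" where
  "inf_cond \<delta> L \<rho> Q g \<longleftrightarrow>
     (\<exists>m > - gam \<delta> L \<rho> Q g. \<forall>y \<in> msupp (lawY Q (sig \<delta> L \<rho>)). m \<le> g y)"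

definition Tfun :: "real \<Rightarrow> real measure \<Rightarrow> real \<Rightarrow> (real \<Rightarrow> real \<Rightarrow> real) \<Rightarrow> (real \<Rightarrow> real) \<Rightarrow> real \<Rightarrow> real" where
  "Tfun \<delta> L \<rho> Q g y = g y / (g y + gam \<delta> L \<rho> Q g)"

definition preproc :: "real \<Rightarrow> real measure \<Rightarrow> real \<Rightarrow> (real \<Rightarrow> real \<Rightarrow> real) \<Rightarrow> (real \<Rightarrow> real) \<Rightarrow> bool" where
  "preproc \<delta> L \<rho> Q g \<longleftrightarrow>
     (let s = sig \<delta> L \<rho>; T = Tfun \<delta> L \<rho> Q g;
          muT = distr (lawY Q s) borel T in
      g \<in> borel_measurable borel \<and>
      (\<exists>M. \<forall>y. g y \<le> M) \<and>
      EY Q s g = 0 \<and>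
      EgZ2 Q s g > 0 \<and>
      inf_cond \<delta> L \<rho> Q g \<and>
      filterlim (\<lambda>x. EY Q s (\<lambda>y. T y / (x - T y))) at_top (at_right (Sup (msupp muT))))"

definition critical :: "real \<Rightarrow> real measure \<Rightarrow> real \<Rightarrow> (real \<Rightarrow> real \<Rightarrow> real) \<Rightarrow> (real \<Rightarrow> real) \<Rightarrow> bool" where
  "critical \<delta> L \<rho> Q g \<longleftrightarrow>
     cst \<delta> L * (EgZ2 Q (sig \<delta> L \<rho>) g)^2 > EY Q (sig \<delta> L \<rho>) (\<lambda>y. (g y)^2)"

end

theory Submission
  imports Defs
begin

lemma cs_aux:
  fixes a b c :: real
  assumes h: "\<And>t. 0 \<le> t^2 * a - 2 * t * b + c" and a: "a \<ge> 0"
  shows "b^2 \<le> a * c"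
proof (cases "a = 0")
  case True
  have "b = 0"
  proof (rule ccontr)
    assume "b \<noteq> 0"
    have "0 \<le> ((c+1)/(2*b))^2 * a - 2 * ((c+1)/(2*b)) * b + c" by (rule h)
    also have "\<dots> = -1" using True \<open>b \<noteq> 0\<close> by (simp add: field_simps)
    finally show False by simp
  qed
  then show ?thesis using True by simp
next
  case False
  then have ap: "a > 0" using a by simp
  have "0 \<le> (b/a)^2 * a - 2 * (b/a) * b + c" by (rule h)
  also have "\<dots> = c - b^2 / a" using ap by (simp add: field_simps power2_eq_square)
  finally have "b^2 / a \<le> c" by simp
  then show ?thesis using ap by (simp add: field_simps mult.commute)
qed

lemma AE_msupp:
  fixes M :: "real measure"
  assumes sM: "sets M = sets borel"
  shows "AE y in M. y \<in> msupp M"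
proof -
  define F where "F = {ball y e | y e. e > 0 \<and> emeasure M (ball y e) = 0}"
  obtain F' where F': "F' \<subseteq> F" "countable F'" "\<Union>F' = \<Union>F"
    using Lindelof[of F] unfolding F_def by auto
  have "(\<Union>i\<in>F'. i) \<in> null_sets M"
  proof (rule null_sets_UN'[OF F'(2)])
    fix i assume "i \<in> F'"
    then have "i \<in> F" using F' by auto
    then obtain y e where "i = ball y e" "emeasure M (ball y e) = 0" unfolding F_def by auto
    moreover have "ball y e \<in> sets M" using sM by simp
    ultimately show "i \<in> null_sets M" by (auto intro: null_setsI)
  qed
  then show ?thesis
  proof (rule AE_I')
    show "{x \<in> space M. x \<notin> msupp M} \<subseteq> (\<Union>i\<in>F'. i)"
    proof
      fix x assume "x \<in> {x \<in> space M. x \<notin> msupp M}"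
      then obtain e where "e > 0" "\<not> emeasure M (ball x e) > 0" unfolding msupp_def by auto
      then have "ball x e \<in> F" unfolding F_def by (auto simp: not_less)
      moreover have "x \<in> ball x e" using \<open>e > 0\<close> by simp
      ultimately show "x \<in> (\<Union>i\<in>F'. i)" using F'(3) by blast
    qed
  qed
qed

locale glm =
  fixes Q :: "real \<Rightarrow> real \<Rightarrow> real" and s :: real
  assumes Q_meas: "(\<lambda>(z, y). Q z y) \<in> borel_measurable borel"
    and Q_nonneg: "\<And>z y. Q z y \<ge> 0"
    and Q_dens: "\<And>z. (\<integral>\<^sup>+ y. ennreal (Q z y) \<partial>lborel) = 1"
begin

lemma Qm_gen[measurable (raw)]:
  assumes "f \<in> borel_measurable M" "g \<in> borel_measurable M"
  shows "(\<lambda>p. Q (f p) (g p)) \<in> borel_measurable M"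
proof -
  have m: "(\<lambda>(z, y). Q z y) \<in> borel_measurable (borel \<Otimes>\<^sub>M borel)"
    using Q_meas by (simp add: borel_prod)
  have "(\<lambda>p. (f p, g p)) \<in> measurable M (borel \<Otimes>\<^sub>M borel)"
    using assms by measurable
  from measurable_comp[OF this m] show ?thesis by (simp add: o_def)
qed

lemma Q_int: "integrable lborel (\<lambda>y. Q z y)" and Q_int1: "(\<integral>y. Q z y \<partial>lborel) = 1"
proof -
  have "has_bochner_integral lborel (\<lambda>y. Q z y) 1"
    using Q_dens[of z] Q_nonneg
    by (intro has_bochner_integral_nn_integral) auto
  then show "integrable lborel (\<lambda>y. Q z y)" "(\<integral>y. Q z y \<partial>lborel) = 1"
    by (simp_all add: has_bochner_integral_iff)
qed

lemma fub_nn: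
  assumes hm[measurable]: "h \<in> borel_measurable borel"
  shows "(\<integral>\<^sup>+p. ennreal ((\<lambda>(y,x). \<bar>h x\<bar> * Q (s * x) y * std_normal_density x) p) \<partial>(lborel \<Otimes>\<^sub>M lborel))
       = (\<integral>\<^sup>+x. ennreal (\<bar>h x\<bar> * std_normal_density x) \<partial>lborel)"
proof -
  have "(\<integral>\<^sup>+p. ennreal ((\<lambda>(y,x). \<bar>h x\<bar> * Q (s * x) y * std_normal_density x) p) \<partial>(lborel \<Otimes>\<^sub>M lborel))
      = (\<integral>\<^sup>+y. \<integral>\<^sup>+x. ennreal (\<bar>h x\<bar> * Q (s * x) y * std_normal_density x) \<partial>lborel \<partial>lborel)"
    by (subst lborel.nn_integral_fst[symmetric]) auto
  also have "\<dots> = (\<integral>\<^sup>+x. \<integral>\<^sup>+y. ennreal (\<bar>h x\<bar> * Q (s * x) y * std_normal_density x) \<partial>lborel \<partial>lborel)"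
    by (rule lborel_pair.Fubini'[where f="\<lambda>x y. ennreal (\<bar>h x\<bar> * Q (s * x) y * std_normal_density x)"]) 
      measurable
  also have "\<dots> = (\<integral>\<^sup>+x. ennreal (\<bar>h x\<bar> * std_normal_density x) \<partial>lborel)"
  proof (rule nn_integral_cong)
    fix x
    have "(\<integral>\<^sup>+y. ennreal (\<bar>h x\<bar> * Q (s * x) y * std_normal_density x) \<partial>lborel)
        = (\<integral>\<^sup>+y. ennreal (\<bar>h x\<bar> * std_normal_density x) * ennreal (Q (s * x) y) \<partial>lborel)"
      by (intro nn_integral_cong) (simp add: ennreal_mult'[symmetric] Q_nonneg mult_ac)
    also have "\<dots> = ennreal (\<bar>h x\<bar> * std_normal_density x)"
      by (subst nn_integral_cmult) (auto simp: Q_dens)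
    finally show "(\<integral>\<^sup>+y. ennreal (\<bar>h x\<bar> * Q (s * x) y * std_normal_density x) \<partial>lborel) = ennreal (\<bar>h x\<bar> * std_normal_density x)" .
  qed
  finally show ?thesis .
qed


lemma fub:
  fixes h :: "real \<Rightarrow> real"
  assumes hm[measurable]: "h \<in> borel_measurable borel"
    and hi: "integrable lborel (\<lambda>x. h x * std_normal_density x)"
  shows fub_int: "integrable (lborel \<Otimes>\<^sub>M lborel) (\<lambda>(y,x). h x * Q (s * x) y * std_normal_density x)"
    and fub_ae: "AE y in lborel. integrable lborel (\<lambda>x. h x * Q (s * x) y * std_normal_density x)"
    and fub_int2: "integrable lborel (\<lambda>y. \<integral>x. h x * Q (s * x) y * std_normal_density x \<partial>lborel)"
    and fub_eq: "(\<integral>y. (\<integral>x. h x * Q (s * x) y * std_normal_density x \<partial>lborel) \<partial>lborel) = (\<integral>x. h x * std_normal_density x \<partial>lborel)"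
proof -
  show I: "integrable (lborel \<Otimes>\<^sub>M lborel) (\<lambda>(y,x). h x * Q (s * x) y * std_normal_density x)"
    unfolding integrable_iff_bounded
  proof
    show "(\<lambda>(y,x). h x * Q (s * x) y * std_normal_density x) \<in> borel_measurable (lborel \<Otimes>\<^sub>M lborel)"
      by measurable
    have "(\<integral>\<^sup>+ p. ennreal (norm ((\<lambda>(y,x). h x * Q (s * x) y * std_normal_density x) p)) \<partial>(lborel \<Otimes>\<^sub>M lborel))
       = (\<integral>\<^sup>+p. ennreal ((\<lambda>(y,x). \<bar>h x\<bar> * Q (s * x) y * std_normal_density x) p) \<partial>(lborel \<Otimes>\<^sub>M lborel))"
      by (intro nn_integral_cong) (auto simp: abs_mult Q_nonneg)
    also have "\<dots> = (\<integral>\<^sup>+x. ennreal (\<bar>h x\<bar> * std_normal_density x) \<partial>lborel)"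
      by (rule fub_nn) simp
    also have "\<dots> = (\<integral>\<^sup>+x. ennreal (norm (h x * std_normal_density x)) \<partial>lborel)"
      by (intro nn_integral_cong) (auto simp: abs_mult)
    also have "\<dots> < \<infinity>" using hi unfolding integrable_iff_bounded by simp
    finally show "(\<integral>\<^sup>+ p. ennreal (norm ((\<lambda>(y,x). h x * Q (s * x) y * std_normal_density x) p)) \<partial>(lborel \<Otimes>\<^sub>M lborel)) < \<infinity>" .
  qed
  show "AE y in lborel. integrable lborel (\<lambda>x. h x * Q (s * x) y * std_normal_density x)"
    using lborel_pair.AE_integrable_fst[OF I] .
  show "integrable lborel (\<lambda>y. \<integral>x. h x * Q (s * x) y * std_normal_density x \<partial>lborel)"
    using lborel_pair.integrable_fst[OF I] .
  have "(\<integral>y. (\<integral>x. h x * Q (s * x) y * std_normal_density x \<partial>lborel) \<partial>lborel)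
     = (\<integral>x. (\<integral>y. h x * Q (s * x) y * std_normal_density x \<partial>lborel) \<partial>lborel)"
    using lborel_pair.Fubini_integral[OF I] by simp
  also have "\<dots> = (\<integral>x. h x * std_normal_density x \<partial>lborel)"
  proof (rule Bochner_Integration.integral_cong[OF refl])
    fix x
    have "(\<integral>y. h x * Q (s * x) y * std_normal_density x \<partial>lborel) = (\<integral>y. (h x * std_normal_density x) * Q (s * x) y \<partial>lborel)"
      by (simp add: mult_ac)
    also have "\<dots> = h x * std_normal_density x"
      by (simp add: Q_int1)
    finally show "(\<integral>y. h x * Q (s * x) y * std_normal_density x \<partial>lborel) = h x * std_normal_density x" .
  qed
  finally show "(\<integral>y. (\<integral>x. h x * Q (s * x) y * std_normal_density x \<partial>lborel) \<partial>lborel) = (\<integral>x. h x * std_normal_density x \<partial>lborel)" .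
qed


lemma phi_int: "integrable lborel (\<lambda>x. std_normal_density x)"
  using integrable_std_normal_moment[of 0] by simp
lemma phi_int1: "(\<integral>x. std_normal_density x \<partial>lborel) = 1"
  using integral_std_normal_moment_even[of 0] by simp
lemma x2_int: "integrable lborel (\<lambda>x. x^2 * std_normal_density x)"
  using integrable_std_normal_moment[of 2] by (simp add: mult.commute)
lemma x2_int1: "(\<integral>x. x^2 * std_normal_density x \<partial>lborel) = 1"
  using integral_std_normal_moment_even[of 1] by (simp add: mult.commute)
lemma x4_int: "integrable lborel (\<lambda>x. x^4 * std_normal_density x)"
  using integrable_std_normal_moment[of 4] by (simp add: mult.commute)
lemma h1_int: "integrable lborel (\<lambda>x. (x^2 - 1) * std_normal_density x)"
  using x2_int phi_int by (simp add: left_diff_distrib)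
lemma h1_int0: "(\<integral>x. (x^2 - 1) * std_normal_density x \<partial>lborel) = 0"
  using x2_int phi_int x2_int1 phi_int1 by (simp add: left_diff_distrib)
lemma h2_int: "integrable lborel (\<lambda>x. (x^2 - 1)^2 * std_normal_density x)"
proof -
  have "(\<lambda>x. (x^2 - 1)^2 * std_normal_density x) = (\<lambda>x. x^4 * std_normal_density x - 2 * (x^2 * std_normal_density x) + std_normal_density x)"
    by (rule ext) (simp add: eval_nat_numeral algebra_simps)
  then show ?thesis using x4_int x2_int phi_int by simp
qed

abbreviation "eq y \<equiv> EQ Q s y"
abbreviation "eqz y \<equiv> EQZ Q s y"
abbreviation "ex2 y \<equiv> (\<integral>x. x^2 * Q (s * x) y * std_normal_density x \<partial>lborel)"
abbreviation "e2 y \<equiv> (\<integral>x. (x^2 - 1)^2 * Q (s * x) y * std_normal_density x \<partial>lborel)"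

lemma eq_int: "integrable lborel eq" and eq_int1: "(\<integral>y. eq y \<partial>lborel) = 1"
  and ae_eq: "AE y in lborel. integrable lborel (\<lambda>x. Q (s * x) y * std_normal_density x)"
  using fub_int2[of "\<lambda>_. 1"] fub_eq[of "\<lambda>_. 1"] fub_ae[of "\<lambda>_. 1"] phi_int phi_int1
  by (simp_all add: EQ_def)

lemma eqz_int: "integrable lborel eqz" and eqz_int0: "(\<integral>y. eqz y \<partial>lborel) = 0"
  and ae_eqz: "AE y in lborel. integrable lborel (\<lambda>x. (x^2 - 1) * Q (s * x) y * std_normal_density x)"
  using fub_int2[of "\<lambda>x. x^2 - 1"] fub_eq[of "\<lambda>x. x^2 - 1"] fub_ae[of "\<lambda>x. x^2 - 1"] h1_int h1_int0
  by (simp_all add: EQZ_def)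

lemma e2_int: "integrable lborel e2"
  and ae_e2: "AE y in lborel. integrable lborel (\<lambda>x. (x^2 - 1)^2 * Q (s * x) y * std_normal_density x)"
  using fub_int2[of "\<lambda>x. (x^2 - 1)^2"] fub_ae[of "\<lambda>x. (x^2 - 1)^2"] h2_int
  by simp_all

lemma ae_ex2: "AE y in lborel. integrable lborel (\<lambda>x. x^2 * Q (s * x) y * std_normal_density x)"
  using fub_ae[of "\<lambda>x. x^2"] x2_int by simp

lemma eq_meas[measurable]: "eq \<in> borel_measurable lborel"
  unfolding EQ_def by measurable
lemma eqz_meas[measurable]: "eqz \<in> borel_measurable lborel"
  unfolding EQZ_def by measurable
lemma e2_meas[measurable]: "e2 \<in> borel_measurable lborel"
  by measurable

lemma eq_nonneg: "eq y \<ge> 0"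
  unfolding EQ_def by (rule Bochner_Integration.integral_nonneg) (simp add: Q_nonneg)


lemma ae_all:
  "AE y in lborel. integrable lborel (\<lambda>x. Q (s * x) y * std_normal_density x) \<and>
     integrable lborel (\<lambda>x. (x^2 - 1) * Q (s * x) y * std_normal_density x) \<and>
     integrable lborel (\<lambda>x. (x^2 - 1)^2 * Q (s * x) y * std_normal_density x) \<and>
     integrable lborel (\<lambda>x. x^2 * Q (s * x) y * std_normal_density x)"
  using ae_eq ae_eqz ae_e2 ae_ex2 by eventually_elim auto

lemma ae_cs: "AE y in lborel. (eqz y)^2 \<le> eq y * e2 y \<and> ex2 y = eqz y + eq y"
  using ae_all
proof eventually_elim
  case (elim y)
  then have i1: "integrable lborel (\<lambda>x. Q (s * x) y * std_normal_density x)"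
    and i2: "integrable lborel (\<lambda>x. (x^2 - 1) * Q (s * x) y * std_normal_density x)"
    and i3: "integrable lborel (\<lambda>x. (x^2 - 1)^2 * Q (s * x) y * std_normal_density x)"
    and i4: "integrable lborel (\<lambda>x. x^2 * Q (s * x) y * std_normal_density x)" by auto
  have "(eqz y)^2 \<le> eq y * e2 y"
  proof (rule cs_aux[OF _ eq_nonneg])
    fix t :: real
    have "0 \<le> (\<integral>x. (t - (x^2 - 1))^2 * (Q (s * x) y * std_normal_density x) \<partial>lborel)"
      by (rule Bochner_Integration.integral_nonneg) (simp add: Q_nonneg)
    also have "(\<integral>x. (t - (x^2 - 1))^2 * (Q (s * x) y * std_normal_density x) \<partial>lborel)
      = (\<integral>x. t^2 * (Q (s * x) y * std_normal_density x) - 2 * t * ((x^2 - 1) * Q (s * x) y * std_normal_density x)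
            + (x^2 - 1)^2 * Q (s * x) y * std_normal_density x \<partial>lborel)"
      by (rule Bochner_Integration.integral_cong[OF refl]) (simp add: power2_eq_square algebra_simps)
    also have "\<dots> = t^2 * eq y - 2 * t * eqz y + e2 y"
      using i1 i2 i3 by (simp add: EQ_def EQZ_def)
    finally show "0 \<le> t^2 * eq y - 2 * t * eqz y + e2 y" .
  qed
  moreover have "ex2 y = eqz y + eq y"
  proof -
    have "ex2 y = (\<integral>x. (x^2 - 1) * Q (s * x) y * std_normal_density x + Q (s * x) y * std_normal_density x \<partial>lborel)"
      by (rule Bochner_Integration.integral_cong[OF refl]) (simp add: algebra_simps)
    also have "\<dots> = eqz y + eq y" using i1 i2 by (simp add: EQ_def EQZ_def)
    finally show ?thesis .
  qed
  ultimately show ?case by simp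
qed

lemma ae_eq0: "AE y in lborel. eq y = 0 \<longrightarrow> eqz y = 0"
  using ae_cs by eventually_elim auto

lemma gopt_lb: "-1 \<le> gopt Q s y"
proof (cases "eq y = 0")
  case True then show ?thesis by (simp add: gopt_def)
next
  case False
  then have pos: "eq y > 0" using eq_nonneg[of y] by simp
  then have i1: "integrable lborel (\<lambda>x. Q (s * x) y * std_normal_density x)"
    using not_integrable_integral_eq unfolding EQ_def by fastforce
  show ?thesis
  proof (cases "integrable lborel (\<lambda>x. (x^2 - 1) * Q (s * x) y * std_normal_density x)")
    case True
    have "- eq y = (\<integral>x. - (Q (s * x) y * std_normal_density x) \<partial>lborel)" by (simp add: EQ_def)
    also have "\<dots> \<le> eqz y" unfolding EQZ_def
    proof (rule integral_mono[OF _ True])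
      show "integrable lborel (\<lambda>x. - (Q (s * x) y * std_normal_density x))" using i1 by simp
      fix x
      have "0 \<le> x^2 * (Q (s * x) y * std_normal_density x)" using Q_nonneg by simp
      then show "- (Q (s * x) y * std_normal_density x) \<le> (x^2 - 1) * Q (s * x) y * std_normal_density x"
        by (simp add: algebra_simps)
    qed
    finally show ?thesis using pos by (simp add: gopt_def field_simps)
  next
    case False
    then have "eqz y = 0" unfolding EQZ_def by (rule not_integrable_integral_eq)
    then show ?thesis by (simp add: gopt_def)
  qed
qed

lemma iopt_int: "integrable lborel (\<lambda>y. (eqz y)^2 / eq y)"
proof (rule Bochner_Integration.integrable_bound[OF e2_int])
  show "(\<lambda>y. (eqz y)^2 / eq y) \<in> borel_measurable lborel" by measurable
  show "AE y in lborel. norm ((eqz y)^2 / eq y) \<le> norm (e2 y)"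
    using ae_cs
  proof eventually_elim
    case (elim y)
    have e2: "e2 y \<ge> 0" by (rule Bochner_Integration.integral_nonneg) (simp add: Q_nonneg)
    show ?case
    proof (cases "eq y = 0")
      case True then show ?thesis using e2 by simp
    next
      case False
      then have "eq y > 0" using eq_nonneg[of y] by simp
      then show ?thesis using elim e2 eq_nonneg[of y] by (simp add: field_simps mult.commute)
    qed
  qed
qed

lemma iopt_nonneg: "Iopt Q s \<ge> 0"
  unfolding Iopt_def by (rule Bochner_Integration.integral_nonneg) (simp add: eq_nonneg)


lemma EY_gopt2: "EY Q s (\<lambda>y. (gopt Q s y)^2) = Iopt Q s"
  unfolding EY_def Iopt_def gopt_def
  by (rule Bochner_Integration.integral_cong[OF refl]) (simp add: power2_eq_square)

lemma EgZ2_eq: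
  assumes gm[measurable]: "g \<in> borel_measurable borel"
  shows "EgZ2 Q s g = (\<integral>y. g y * (eqz y + eq y) \<partial>lborel)"
  unfolding EgZ2_def
proof (rule integral_cong_AE)
  show "(\<lambda>y. \<integral>x. g y * x\<^sup>2 * Q (s * x) y * std_normal_density x \<partial>lborel) \<in> borel_measurable lborel"
    by measurable
  show "(\<lambda>y. g y * (eqz y + eq y)) \<in> borel_measurable lborel" by measurable
  show "AE y in lborel. (\<integral>x. g y * x\<^sup>2 * Q (s * x) y * std_normal_density x \<partial>lborel) = g y * (eqz y + eq y)"
    using ae_cs
  proof eventually_elim
    case (elim y)
    have "(\<integral>x. g y * x\<^sup>2 * Q (s * x) y * std_normal_density x \<partial>lborel) = (\<integral>x. g y * (x\<^sup>2 * Q (s * x) y * std_normal_density x) \<partial>lborel)"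
      by (simp add: mult_ac)
    also have "\<dots> = g y * ex2 y" by simp
    finally show ?case using elim by simp
  qed
qed

lemma gopt_meas[measurable]: "gopt Q s \<in> borel_measurable borel"
proof -
  have "(\<lambda>y. eqz y / eq y) \<in> borel_measurable lborel" by measurable
  then show ?thesis unfolding gopt_def by simp
qed

lemma EgZ2_gopt: "EgZ2 Q s (gopt Q s) = Iopt Q s"
proof -
  have "EgZ2 Q s (gopt Q s) = (\<integral>y. gopt Q s y * (eqz y + eq y) \<partial>lborel)"
    by (rule EgZ2_eq) measurable
  also have "\<dots> = (\<integral>y. (eqz y)^2 / eq y + eqz y \<partial>lborel)"
  proof (rule integral_cong_AE)
    show "(\<lambda>y. gopt Q s y * (eqz y + eq y)) \<in> borel_measurable lborel" by measurable
    show "(\<lambda>y. (eqz y)^2 / eq y + eqz y) \<in> borel_measurable lborel" by measurable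
    show "AE y in lborel. gopt Q s y * (eqz y + eq y) = (eqz y)^2 / eq y + eqz y"
      using ae_eq0 by eventually_elim (auto simp: gopt_def field_simps power2_eq_square)
  qed
  also have "\<dots> = Iopt Q s + 0"
    using iopt_int eqz_int eqz_int0 by (simp add: Iopt_def)
  finally show ?thesis by simp
qed

lemma EY_gopt: "EY Q s (gopt Q s) = 0"
proof -
  have "EY Q s (gopt Q s) = (\<integral>y. eqz y \<partial>lborel)"
    unfolding EY_def
  proof (rule integral_cong_AE)
    show "(\<lambda>y. gopt Q s y * eq y) \<in> borel_measurable lborel" by measurable
    show "eqz \<in> borel_measurable lborel" by measurable
    show "AE y in lborel. gopt Q s y * eq y = eqz y"
      using ae_eq0 by eventually_elim (auto simp: gopt_def)
  qed
  then show ?thesis using eqz_int0 by simp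
qed

lemma part2:
  fixes g :: "real \<Rightarrow> real" and a b c :: real
  assumes gm[measurable]: "g \<in> borel_measurable borel"
    and bnd: "AE y in lborel. eq y > 0 \<longrightarrow> a \<le> g y \<and> g y \<le> b"
    and EY0: "EY Q s g = 0" and Epos: "EgZ2 Q s g > 0"
    and crit: "c * (EgZ2 Q s g)^2 > EY Q s (\<lambda>y. (g y)^2)"
  shows "c * Iopt Q s > 1"
proof -
  define K where "K = \<bar>a\<bar> + \<bar>b\<bar>"
  have bndK: "AE y in lborel. eq y > 0 \<longrightarrow> \<bar>g y\<bar> \<le> K"
    using bnd by eventually_elim (auto simp: K_def)
  have i1: "integrable lborel (\<lambda>y. g y * eq y)"
  proof (rule Bochner_Integration.integrable_bound)
    show "integrable lborel (\<lambda>y. K * eq y)" using eq_int by simp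
    show "(\<lambda>y. g y * eq y) \<in> borel_measurable lborel" by measurable
    show "AE y in lborel. norm (g y * eq y) \<le> norm (K * eq y)"
      using bndK
    proof eventually_elim
      case (elim y)
      show ?case
      proof (cases "eq y = 0")
        case False
        then have "eq y > 0" using eq_nonneg[of y] by simp
        then show ?thesis using elim eq_nonneg[of y] by (simp add: abs_mult mult_right_mono)
      qed simp
    qed
  qed
  have i2: "integrable lborel (\<lambda>y. (g y)^2 * eq y)"
  proof (rule Bochner_Integration.integrable_bound)
    show "integrable lborel (\<lambda>y. K^2 * eq y)" using eq_int by simp
    show "(\<lambda>y. (g y)^2 * eq y) \<in> borel_measurable lborel" by measurable
    show "AE y in lborel. norm ((g y)^2 * eq y) \<le> norm (K^2 * eq y)"
      using bndK
    proof eventually_elim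
      case (elim y)
      show ?case
      proof (cases "eq y = 0")
        case False
        then have "eq y > 0" using eq_nonneg[of y] by simp
        then have "\<bar>g y\<bar> \<le> K" using elim by simp
        then have "\<bar>g y\<bar>^2 \<le> K^2" by (intro power_mono) auto
        then have "(g y)^2 \<le> K^2" by simp
        then show ?thesis using eq_nonneg[of y] by (simp add: abs_mult mult_right_mono)
      qed simp
    qed
  qed
  have i3: "integrable lborel (\<lambda>y. g y * eqz y)"
  proof (rule Bochner_Integration.integrable_bound)
    show "integrable lborel (\<lambda>y. K * \<bar>eqz y\<bar>)" using eqz_int by simp
    show "(\<lambda>y. g y * eqz y) \<in> borel_measurable lborel" by measurable
    show "AE y in lborel. norm (g y * eqz y) \<le> norm (K * \<bar>eqz y\<bar>)"
      using bndK ae_eq0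
    proof eventually_elim
      case (elim y)
      show ?case
      proof (cases "eq y = 0")
        case False
        then have "eq y > 0" using eq_nonneg[of y] by simp
        then have "\<bar>g y\<bar> \<le> K" using elim by simp
        then show ?thesis by (simp add: abs_mult mult_right_mono)
      qed (use elim in simp)
    qed
  qed
  define A where "A = EgZ2 Q s g"
  define B where "B = EY Q s (\<lambda>y. (g y)^2)"
  have A_eq: "A = (\<integral>y. g y * eqz y \<partial>lborel)"
  proof -
    have "A = (\<integral>y. g y * eqz y + g y * eq y \<partial>lborel)"
      unfolding A_def by (simp add: EgZ2_eq distrib_left)
    also have "\<dots> = (\<integral>y. g y * eqz y \<partial>lborel) + EY Q s g"
      using i1 i3 by (simp add: EY_def)
    finally show ?thesis using EY0 by simp
  qed
  have key: "2 * l * A \<le> B + l^2 * Iopt Q s" for l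
  proof -
    have "2 * l * A = (\<integral>y. 2 * l * (g y * eqz y) \<partial>lborel)" using A_eq by simp
    also have "\<dots> \<le> (\<integral>y. (g y)^2 * eq y + l^2 * ((eqz y)^2 / eq y) \<partial>lborel)"
    proof (rule integral_mono_AE)
      show "integrable lborel (\<lambda>y. 2 * l * (g y * eqz y))" using i3 by simp
      show "integrable lborel (\<lambda>y. (g y)^2 * eq y + l^2 * ((eqz y)^2 / eq y))"
        by (rule Bochner_Integration.integrable_add[OF i2 integrable_mult_right[OF iopt_int]])
      show "AE y in lborel. 2 * l * (g y * eqz y) \<le> (g y)^2 * eq y + l^2 * ((eqz y)^2 / eq y)"
        using ae_eq0
      proof eventually_elim
        case (elim y)
        show ?case
        proof (cases "eq y = 0")
          case False
          then have p: "eq y > 0" using eq_nonneg[of y] by simp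
          have "0 \<le> eq y * (g y - l * eqz y / eq y)^2" using p by simp
          also have "eq y * (g y - l * eqz y / eq y)^2 = (g y)^2 * eq y + l^2 * ((eqz y)^2 / eq y) - 2 * l * (g y * eqz y)"
            using p by (simp add: field_simps power2_eq_square)
          finally show ?thesis by simp
        qed (use elim in simp)
      qed
    qed
    also have "\<dots> = (\<integral>y. (g y)^2 * eq y \<partial>lborel) + (\<integral>y. l^2 * ((eqz y)^2 / eq y) \<partial>lborel)"
      by (rule Bochner_Integration.integral_add[OF i2 integrable_mult_right[OF iopt_int]])
    also have "\<dots> = B + l^2 * Iopt Q s"
      by (simp only: integral_mult_right_zero B_def EY_def Iopt_def)
    finally show ?thesis .
  qed
  have Bnn: "B \<ge> 0" unfolding B_def EY_def
    by (rule Bochner_Integration.integral_nonneg) (simp add: eq_nonneg)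
  have Apos: "A > 0" using Epos A_def by simp
  have critAB: "c * A^2 > B" using crit A_def B_def by simp
  then have cpos: "c > 0" using Bnn Apos by (smt (verit) mult_nonpos_nonneg zero_le_power2)
  have "2 * (c * A) * A \<le> B + (c * A)^2 * Iopt Q s" by (rule key)
  then have "c * A^2 < (c * A)^2 * Iopt Q s" using critAB by (simp add: power2_eq_square algebra_simps)
  then have "c * A^2 * 1 < c * A^2 * (c * Iopt Q s)" by (simp add: power2_eq_square algebra_simps)
  then show ?thesis using cpos Apos by (simp add: mult_less_cancel_left)
qed


end

theorem mainTheorem2:
  fixes \<delta> \<rho> :: real and L :: "real measure" and Q :: "real \<Rightarrow> real \<Rightarrow> real"
  assumes delta_pos: "\<delta> > 0"
    and rho_pos: "\<rho> > 0"
    and L_prob: "prob_space L"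
    and L_sets: "sets L = sets borel"
    and L_compact: "\<exists>a b. 0 < a \<and> a \<le> b \<and> emeasure L {a..b} = 1"
    and L_var: "prob_space.variance L (\<lambda>l. l) > 0"
    and Q_meas: "(\<lambda>(z, y). Q z y) \<in> borel_measurable borel"
    and Q_nonneg: "\<And>z y. Q z y \<ge> 0"
    and Q_dens: "\<And>z. (\<integral>\<^sup>+ y. ennreal (Q z y) \<partial>lborel) = 1"
  shows
    "(cst \<delta> L * Iopt Q (sig \<delta> L \<rho>) > 1 \<longrightarrow>
        critical \<delta> L \<rho> Q (gopt Q (sig \<delta> L \<rho>)) \<and>
        (EY Q (sig \<delta> L \<rho>) (\<lambda>y. (gopt Q (sig \<delta> L \<rho>) y)^2) > 0 \<longrightarrow>
           inf_cond \<delta> L \<rho> Q (gopt Q (sig \<delta> L \<rho>)) \<and>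
           EY Q (sig \<delta> L \<rho>) (gopt Q (sig \<delta> L \<rho>)) = 0 \<and>
           EgZ2 Q (sig \<delta> L \<rho>) (gopt Q (sig \<delta> L \<rho>)) > 0))
     \<and>
     (\<forall>g. preproc \<delta> L \<rho> Q g \<and> critical \<delta> L \<rho> Q g \<longrightarrow> cst \<delta> L * Iopt Q (sig \<delta> L \<rho>) > 1)"
proof -
  define s where "s = sig \<delta> L \<rho>"
  define c where "c = cst \<delta> L"
  interpret glm Q s
    by unfold_locales (auto simp: Q_meas Q_nonneg Q_dens)
  define I where "I = Iopt Q s"
  have I0: "I \<ge> 0" using iopt_nonneg I_def by simp
  have P1: "c * I > 1 \<longrightarrow>
        critical \<delta> L \<rho> Q (gopt Q s) \<and>
        (EY Q s (\<lambda>y. (gopt Q s y)^2) > 0 \<longrightarrow>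
           inf_cond \<delta> L \<rho> Q (gopt Q s) \<and> EY Q s (gopt Q s) = 0 \<and> EgZ2 Q s (gopt Q s) > 0)"
  proof
    assume h: "c * I > 1"
    then have Ipos: "I > 0" using I0 by (cases "I = 0") auto
    have "c * I * I > 1 * I" using h Ipos by (intro mult_strict_right_mono) auto
    then have crit: "critical \<delta> L \<rho> Q (gopt Q s)"
      unfolding critical_def s_def[symmetric] EgZ2_gopt EY_gopt2 I_def[symmetric] c_def[symmetric]
      by (simp add: power2_eq_square mult_ac)
    have ic: "inf_cond \<delta> L \<rho> Q (gopt Q s)"
      unfolding inf_cond_def gam_def s_def[symmetric] EgZ2_gopt I_def[symmetric] c_def[symmetric]
      using h gopt_lb by (intro exI[of _ "-1"]) auto
    show "critical \<delta> L \<rho> Q (gopt Q s) \<and>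
        (EY Q s (\<lambda>y. (gopt Q s y)^2) > 0 \<longrightarrow>
           inf_cond \<delta> L \<rho> Q (gopt Q s) \<and> EY Q s (gopt Q s) = 0 \<and> EgZ2 Q s (gopt Q s) > 0)"
      using crit ic EY_gopt EgZ2_gopt Ipos I_def by simp
  qed
  have P2: "\<forall>g. preproc \<delta> L \<rho> Q g \<and> critical \<delta> L \<rho> Q g \<longrightarrow> c * I > 1"
  proof (intro allI impI)
    fix g assume "preproc \<delta> L \<rho> Q g \<and> critical \<delta> L \<rho> Q g"
    then have pp: "preproc \<delta> L \<rho> Q g" and cr: "critical \<delta> L \<rho> Q g" by auto
    from pp have gm: "g \<in> borel_measurable borel" and ub: "\<exists>M. \<forall>y. g y \<le> M"
      and EY0: "EY Q s g = 0" and Ep: "EgZ2 Q s g > 0" and ic: "inf_cond \<delta> L \<rho> Q g"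
      unfolding preproc_def Let_def s_def by auto
    obtain M where M: "\<And>y. g y \<le> M" using ub by auto
    obtain m where m: "\<And>y. y \<in> msupp (lawY Q s) \<Longrightarrow> m \<le> g y"
      using ic unfolding inf_cond_def s_def by auto
    have "AE y in lawY Q s. y \<in> msupp (lawY Q s)"
      by (rule AE_msupp) (simp add: lawY_def)
    then have "AE y in lborel. 0 < ennreal (eq y) \<longrightarrow> y \<in> msupp (lawY Q s)"
      unfolding lawY_def by (subst (asm) AE_density) auto
    then have bnd: "AE y in lborel. eq y > 0 \<longrightarrow> m \<le> g y \<and> g y \<le> M"
      by eventually_elim (auto simp: m M)
    show "c * I > 1"
      unfolding I_def c_def
      by (rule part2[OF gm bnd EY0 Ep]) (use cr in \<open>simp add: critical_def s_def\<close>)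
  qed
  show ?thesis using P1 P2 unfolding s_def c_def I_def by blast
qed

end
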